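(* Let $n=p^k$, where $p$ is a prime and $k\ge2$, and let $G=\langle p^{k-1}+1\rangle$ be the subgroup of $\mathbb{Z}_n^\times$ generated by $p^{k-1}+1$. Then the coset index function $f_G$ is a $(p^k,\ 2p^{k-1}-p^{k-2},\ \{0,p^k-p^{k-1}\})$ zero-difference function.
   Context: For a subgroup $G$ of $\mathbb{Z}_n^\times$ and $r\in\mathbb{Z}_n$, the coset $rG=\{rg\mid g\in G\}$; these cosets partition $\mathbb{Z}_n$, forming a set $D_G$. The coset index function induced by $G$ is $f_G:\mathbb{Z}_n\to\mathbb{Z}_{|D_G|}$, $f_G(x)=h_G(C_x)$, where $C_x$ is the coset containing $x$ and $h_G:D_G\to\mathbb{Z}_{|D_G|}$ is a fixed bijection. A function $f:A\to B$ between finite abelian groups is an $(n,m,S)$ zero-difference function if $n=|A|$, $m=|f(A)|$, and for every nonzero $a\in A$, $|\{x\in A\mid f(x+a)=f(x)\}|\in S$. Here $A=(\mathbb{Z}_n,+)$. *)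

theory Defs
  imports "HOL-Computational_Algebra.Primes"
begin

text \<open>Z_n is modelled as the carrier {0..<n} of naturals with arithmetic mod n.\<close>

definition gen_subgroup :: "nat \<Rightarrow> nat \<Rightarrow> nat set" where
  "gen_subgroup n g = {g ^ i mod n | i. True}"

definition coset_mult :: "nat \<Rightarrow> nat set \<Rightarrow> nat \<Rightarrow> nat set" where
  "coset_mult n G r = (\<lambda>x. (r * x) mod n) ` G"

definition cosets_D :: "nat \<Rightarrow> nat set \<Rightarrow> nat set set" where
  "cosets_D n G = coset_mult n G ` {0..<n}"

definition coset_containing :: "nat \<Rightarrow> nat set \<Rightarrow> nat \<Rightarrow> nat set" where
  "coset_containing n G x = (THE C. C \<in> cosets_D n G \<and> x \<in> C)"

definition coset_index_fun :: "nat \<Rightarrow> nat set \<Rightarrow> (nat set \<Rightarrow> nat) \<Rightarrow> nat \<Rightarrow> nat" where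
  "coset_index_fun n G h x = h (coset_containing n G x)"

definition zero_difference_fun :: "nat \<Rightarrow> (nat \<Rightarrow> 'b) \<Rightarrow> nat \<Rightarrow> nat set \<Rightarrow> bool" where
  "zero_difference_fun n f m S \<longleftrightarrow>
     card {0..<n} = n \<and> m = card (f ` {0..<n}) \<and>
     (\<forall>a \<in> {0..<n}. a \<noteq> 0 \<longrightarrow>
        card {x \<in> {0..<n}. f ((x + a) mod n) = f x} \<in> S)"

end

theory Submission imports Defs "HOL-Number_Theory.Cong" begin

lemma pow_mod:
  fixes q n :: nat assumes "n dvd q*q"
  shows "(q+1)^i mod n = (1+i*q) mod n"
proof (induction i)
  case 0 then show ?case by simp
next
  case (Suc i)
  have "(q+1)^Suc i mod n = ((q+1)^i mod n * (q+1)) mod n" by (metis power_Suc2 mod_mult_left_eq)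
  also have "\<dots> = ((1+i*q) * (q+1)) mod n" using Suc by (metis mod_mult_left_eq)
  also have "(1+i*q) * (q+1) = (1 + Suc i * q) + i*(q*q)" by (simp add: algebra_simps)
  also have "(\<dots>) mod n = (1 + Suc i * q) mod n"
  proof -
    obtain c where "q*q = n*c" using assms by (auto elim!: dvdE)
    then have "i*(q*q) = (i*c)*n" by simp
    then show ?thesis by (simp only: mod_mult_self1)
  qed
  finally show ?case .
qed

lemma gen_eq:
  fixes q n :: nat assumes "n dvd q*q"
  shows "gen_subgroup n (q+1) = range (\<lambda>i. (1+i*q) mod n)"
  unfolding gen_subgroup_def using pow_mod[OF assms] by auto

lemma coset_eq:
  fixes q n :: nat assumes "n dvd q*q"
  shows "coset_mult n (gen_subgroup n (q+1)) x = range (\<lambda>i. (x*(1+i*q)) mod n)"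
proof -
  have "coset_mult n (gen_subgroup n (q+1)) x = range (\<lambda>i. x * ((1+i*q) mod n) mod n)"
    unfolding coset_mult_def gen_eq[OF assms] by (simp add: image_image)
  then show ?thesis by (simp add: mod_mult_right_eq)
qed

locale zd_setting =
  fixes p q n :: nat
  assumes pp: "prime p" and pq: "p dvd q" and nq: "n = p*q" and nqq: "n dvd q*q" and q_pos: "q > 0"
begin

definition cls where "cls x = {y\<in>{0..<n}. y mod q = x mod q}"
abbreviation CC where "CC x \<equiv> coset_mult n (gen_subgroup n (q+1)) x"

lemma p_gt1: "p > 1" using pp prime_gt_1_nat by blast
lemma n_pos: "n > 0" using nq q_pos p_gt1 by simp
lemma q_dvd_n: "q dvd n" using nq by simp

lemma coset_div: assumes "x < n" "p dvd x" shows "CC x = {x}"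
proof -
  obtain c where c: "x = p*c" using assms by (auto elim!: dvdE)
  have "x*(1+i*q) mod n = x" for i
  proof -
    have "x*(1+i*q) = x + (c*i)*n" using c nq by (simp add: algebra_simps)
    then have "x*(1+i*q) mod n = x mod n" by (simp only: mod_mult_self1)
    then show ?thesis using assms by simp
  qed
  then show ?thesis unfolding coset_eq[OF nqq] by auto
qed

lemma coset_ndiv: assumes "x < n" "\<not> p dvd x" shows "CC x = cls x"
proof -
  have "x*(1+i*q) mod n \<in> cls x" for i
  proof -
    have "x*(1+i*q) mod n mod q = x*(1+i*q) mod q" using q_dvd_n by (simp add: mod_mod_cancel)
    also have "x*(1+i*q) mod q = x mod q"
    proof -
      have "x*(1+i*q) = x + (x*i)*q" by (simp add: algebra_simps)
      then show ?thesis by (simp only: mod_mult_self1)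
    qed
    finally have h: "x*(1+i*q) mod n mod q = x mod q" .
    show ?thesis unfolding cls_def using n_pos h by (simp del: mult_Suc_right add_Suc_right)
  qed
  moreover have "y \<in> range (\<lambda>i. x*(1+i*q) mod n)" if y: "y \<in> cls x" for y
  proof -
    have yn: "y < n" and yx: "y mod q = x mod q" using y unfolding cls_def by auto
    have "q dvd (y + n - x)"
    proof -
      have "[y + n = x] (mod q)" using yx q_dvd_n unfolding cong_def by (metis add.right_neutral dvd_imp_mod_0 mod_add_right_eq)
      then show ?thesis using assms(1) by (metis cong_diff_iff_cong_0_nat cong_0_iff le_add2 less_imp_le_nat order.trans)
    qed
    then obtain t where t: "y + n - x = q*t" by (auto elim!: dvdE)
    have "coprime x p" using assms pp by (metis coprime_commute prime_imp_coprime)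
    then obtain i where i: "[x*i = t] (mod p)" using cong_solve_dvd_nat[of x p t] by (auto simp: coprime_iff_gcd_eq_1)
    have "[x*i*q = t*q] (mod p*q)" using i unfolding cong_def by (simp add: mod_mult_mult2)
    then have "[x + x*i*q = x + t*q] (mod n)" using nq by (simp add: cong_add_lcancel_nat)
    moreover have "x + t*q = y + n" using t assms(1) by (simp add: algebra_simps)
    ultimately have "[x*(1+i*q) = y] (mod n)" unfolding cong_def by (simp add: algebra_simps)
    then have "x*(1+i*q) mod n = y" using yn unfolding cong_def by simp
    then show ?thesis by blast
  qed
  ultimately show ?thesis unfolding coset_eq[OF nqq] by auto
qed

lemma x_in_cls: "x < n \<Longrightarrow> x \<in> cls x" unfolding cls_def by simp

lemma self_mem: "x < n \<Longrightarrow> x \<in> CC x"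
  using coset_div coset_ndiv x_in_cls by (cases "p dvd x") auto

lemma CC_sub: "CC x \<subseteq> {0..<n}"
  unfolding coset_eq[OF nqq] using n_pos by auto

lemma ndvd_cls: assumes "y \<in> cls x" "\<not> p dvd x" shows "\<not> p dvd y"
proof
  assume "p dvd y"
  then have "p dvd y mod q" using pq by (simp add: dvd_mod)
  then have "p dvd x mod q" using assms unfolding cls_def by simp
  then have "p dvd x" using pq by (simp add: dvd_mod_iff)
  then show False using assms by simp
qed

lemma cls_eq: "y \<in> cls x \<Longrightarrow> cls y = cls x" unfolding cls_def by auto

lemma mem_eq: assumes "x < n" "y \<in> CC x" shows "CC y = CC x"
proof (cases "p dvd x")
  case True then show ?thesis using assms coset_div by auto
next
  case False
  then have y: "y \<in> cls x" using assms coset_ndiv by auto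
  then have "y < n" unfolding cls_def by simp
  then show ?thesis using coset_ndiv[OF assms(1) False] coset_ndiv[OF _ ndvd_cls[OF y False]] cls_eq[OF y] by simp
qed

lemma containing: assumes "x < n" shows "coset_containing n (gen_subgroup n (q+1)) x = CC x"
  unfolding coset_containing_def
proof (rule the_equality)
  show "CC x \<in> cosets_D n (gen_subgroup n (q+1)) \<and> x \<in> CC x"
    using assms self_mem unfolding cosets_D_def by auto
next
  fix C assume "C \<in> cosets_D n (gen_subgroup n (q+1)) \<and> x \<in> C"
  then obtain r where r: "r < n" "C = CC r" "x \<in> CC r" unfolding cosets_D_def by auto
  then show "C = CC x" using mem_eq by auto
qed

lemma card_mults: assumes "(c::nat) > 0" shows "card {x\<in>{0..<c*m}. c dvd x} = m"
proof -
  have "{x\<in>{0..<c*m}. c dvd x} = (\<lambda>y. c*y) ` {0..<m}" using assms by (auto elim!: dvdE)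
  moreover have "inj_on (\<lambda>y. c*y) {0..<m}" using assms by (auto simp: inj_on_def)
  ultimately show ?thesis by (simp add: card_image)
qed

lemma q_le_n: "q \<le> n" using nq p_gt1 by simp
lemma q2_le_n: "q + q \<le> n"
proof -
  have "2*q \<le> p*q" using p_gt1 by (intro mult_le_mono1) simp
  then show ?thesis using nq by (simp add: mult_2)
qed

lemma cls_inj: assumes "x < q" "y < q" "cls x = cls y" shows "x = y"
proof -
  have "x \<in> cls y" using assms(3) x_in_cls[of x] assms(1) q_le_n by auto
  hence "x mod q = y mod q" by (simp add: cls_def)
  thus ?thesis using assms by simp
qed

lemma D_eq: "cosets_D n (gen_subgroup n (q+1)) =
   (\<lambda>x. {x}) ` {x\<in>{0..<n}. p dvd x} \<union> cls ` {x\<in>{0..<q}. \<not> p dvd x}"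
proof -
  have F1: "CC x \<in> (\<lambda>x. {x}) ` {x\<in>{0..<n}. p dvd x} \<union> cls ` {x\<in>{0..<q}. \<not> p dvd x}" if "x < n" for x
  proof (cases "p dvd x")
    case True then show ?thesis using that coset_div by auto
  next
    case False
    have "x mod q < q" using q_pos by simp
    then have m: "x mod q \<in> cls x" using q_le_n unfolding cls_def by simp
    then have "\<not> p dvd x mod q" using ndvd_cls False by blast
    moreover have "cls x = cls (x mod q)" using cls_eq[OF m] by simp
    ultimately show ?thesis using coset_ndiv[OF that False] q_pos by auto
  qed
  have F2: "{x} \<in> cosets_D n (gen_subgroup n (q+1))" if "x<n" "p dvd x" for x
    unfolding cosets_D_def using that coset_div by (intro image_eqI[of _ _ x]) auto
  have F3: "cls x \<in> cosets_D n (gen_subgroup n (q+1))" if "x<q" "\<not> p dvd x" for x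
  proof -
    have "x < n" using that q_le_n by simp
    then show ?thesis unfolding cosets_D_def using that coset_ndiv by (intro image_eqI[of _ _ x]) auto
  qed
  show ?thesis
  proof
    show "cosets_D n (gen_subgroup n (q+1)) \<subseteq> (\<lambda>x. {x}) ` {x\<in>{0..<n}. p dvd x} \<union> cls ` {x\<in>{0..<q}. \<not> p dvd x}"
      unfolding cosets_D_def using F1 by (intro image_subsetI) simp
    show "(\<lambda>x. {x}) ` {x\<in>{0..<n}. p dvd x} \<union> cls ` {x\<in>{0..<q}. \<not> p dvd x} \<subseteq> cosets_D n (gen_subgroup n (q+1))"
      using F2 F3 by (intro Un_least image_subsetI) auto
  qed
qed

lemma card_D: "card (cosets_D n (gen_subgroup n (q+1))) = q + (q - q div p)"
proof -
  have "inj_on (\<lambda>x. {x}) {x\<in>{0..<n}. p dvd x}" by (simp add: inj_on_def)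
  then have "card ((\<lambda>x. {x}) ` {x\<in>{0..<n}. p dvd x}) = card {x\<in>{0..<n}. p dvd x}" by (rule card_image)
  also have "\<dots> = q" using card_mults[of p q] p_gt1 nq by simp
  finally have c1: "card ((\<lambda>x. {x}) ` {x\<in>{0..<n}. p dvd x}) = q" .
  have qq: "q = p * (q div p)" using pq by simp
  have "card {x\<in>{0..<p*(q div p)}. p dvd x} = q div p" by (rule card_mults) (use p_gt1 in simp)
  then have m: "card {x\<in>{0..<q}. p dvd x} = q div p" by (simp only: qq[symmetric])
  have e: "{x\<in>{0..<q}. \<not> p dvd x} = {0..<q} - {x\<in>{0..<q}. p dvd x}" by blast
  have "card ({0..<q} - {x\<in>{0..<q}. p dvd x}) = card {0..<q} - card {x\<in>{0..<q}. p dvd x}"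
    by (rule card_Diff_subset) auto
  then have c2': "card {x\<in>{0..<q}. \<not> p dvd x} = q - q div p"
    unfolding e m by simp
  have "inj_on cls {x\<in>{0..<q}. \<not> p dvd x}"
  proof (rule inj_onI)
    fix x y assume a1: "x \<in> {x\<in>{0..<q}. \<not> p dvd x}" and a2: "y \<in> {x\<in>{0..<q}. \<not> p dvd x}" and a3: "cls x = cls y"
    have "x < q" using a1 by simp
    moreover have "y < q" using a2 by simp
    ultimately show "x = y" using a3 by (rule cls_inj)
  qed
  then have "card (cls ` {x\<in>{0..<q}. \<not> p dvd x}) = card {x\<in>{0..<q}. \<not> p dvd x}" by (rule card_image)
  then have c2: "card (cls ` {x\<in>{0..<q}. \<not> p dvd x}) = q - q div p" using c2' by simp
  have disj: "(\<lambda>x. {x}) ` {x\<in>{0..<n}. p dvd x} \<inter> cls ` {x\<in>{0..<q}. \<not> p dvd x} = {}"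
  proof (rule equals0I)
    fix C assume C: "C \<in> (\<lambda>x. {x}) ` {x\<in>{0..<n}. p dvd x} \<inter> cls ` {x\<in>{0..<q}. \<not> p dvd x}"
    then have "C \<in> (\<lambda>x. {x}) ` {x\<in>{0..<n}. p dvd x}" by (rule IntD1)
    then obtain a where a: "C = {a}" by (rule imageE)
    from C have "C \<in> cls ` {x\<in>{0..<q}. \<not> p dvd x}" by (rule IntD2)
    then obtain x where x: "C = cls x" "x \<in> {x\<in>{0..<q}. \<not> p dvd x}" by (rule imageE)
    have xq: "x < q" using x(2) by simp
    have "x + q < n" using xq q2_le_n by linarith
    then have "x + q \<in> cls x" unfolding cls_def by simp
    moreover have "x < n" using xq q_le_n by linarith
    then have "x \<in> cls x" by (rule x_in_cls)
    ultimately have "x + q \<in> C" "x \<in> C" using x(1) by simp_all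
    then have "x + q = a" "x = a" using a by simp_all
    then show False using q_pos by simp
  qed
  have "card ((\<lambda>x. {x}) ` {x\<in>{0..<n}. p dvd x} \<union> cls ` {x\<in>{0..<q}. \<not> p dvd x}) = 
     card ((\<lambda>x. {x}) ` {x\<in>{0..<n}. p dvd x}) + card (cls ` {x\<in>{0..<q}. \<not> p dvd x})"
    by (rule card_Un_disjoint) (use disj in auto)
  then show ?thesis unfolding D_eq using c1 c2 by simp
qed

lemma CC_in_D: "x < n \<Longrightarrow> CC x \<in> cosets_D n (gen_subgroup n (q+1))"
  unfolding cosets_D_def by simp

lemma CC_eq_iff_mem: assumes "x < n" "y < n" shows "CC y = CC x \<longleftrightarrow> y \<in> CC x"
  using assms self_mem mem_eq by metis

lemma same_coset: assumes "x < n" "0 < a" "a < n"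
  shows "CC ((x+a) mod n) = CC x \<longleftrightarrow> (\<not> p dvd x \<and> q dvd a)"
proof -
  have yn: "(x+a) mod n < n" using n_pos by simp
  show ?thesis
  proof (cases "p dvd x")
    case True
    have "(x+a) mod n \<noteq> x"
    proof
      assume "(x+a) mod n = x"
      then have "[x + a = x] (mod n)" using assms(1) unfolding cong_def by simp
      then have "[a = 0] (mod n)" by (simp add: cong_add_lcancel_0_nat)
      then have "n dvd a" by (simp add: cong_0_iff)
      then show False using assms by (simp add: nat_dvd_not_less)
    qed
    then show ?thesis using CC_eq_iff_mem[OF assms(1) yn] coset_div[OF assms(1) True] True by simp
  next
    case False
    have "(x+a) mod n \<in> cls x \<longleftrightarrow> (x+a) mod n mod q = x mod q" unfolding cls_def using yn by simp
    also have "(x+a) mod n mod q = (x+a) mod q" using q_dvd_n by (simp add: mod_mod_cancel)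
    also have "((x+a) mod q = x mod q) \<longleftrightarrow> [x + a = x] (mod q)" unfolding cong_def by simp
    also have "\<dots> \<longleftrightarrow> q dvd a" by (simp add: cong_add_lcancel_0_nat cong_0_iff)
    finally show ?thesis using CC_eq_iff_mem[OF assms(1) yn] coset_ndiv[OF assms(1) False] False by simp
  qed
qed

lemma card_nondiv: "card {x\<in>{0..<n}. \<not> p dvd x} = n - q"
proof -
  have m: "card {x\<in>{0..<n}. p dvd x} = q" using card_mults[of p q] p_gt1 nq by simp
  have e: "{x\<in>{0..<n}. \<not> p dvd x} = {0..<n} - {x\<in>{0..<n}. p dvd x}" by blast
  have "card ({0..<n} - {x\<in>{0..<n}. p dvd x}) = card {0..<n} - card {x\<in>{0..<n}. p dvd x}"
    by (rule card_Diff_subset) auto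
  then show ?thesis unfolding e m by simp
qed

lemma main_loc:
  assumes hb: "bij_betw h (cosets_D n (gen_subgroup n (q+1))) {0..<card (cosets_D n (gen_subgroup n (q+1)))}"
  shows "zero_difference_fun n (coset_index_fun n (gen_subgroup n (q+1)) h) (q + (q - q div p)) {0, n - q}"
proof -
  let ?G = "gen_subgroup n (q+1)"
  let ?f = "coset_index_fun n ?G h"
  have hinj: "inj_on h (cosets_D n ?G)" using hb by (rule bij_betw_imp_inj_on)
  have fx: "?f x = h (CC x)" if "x < n" for x
    unfolding coset_index_fun_def using containing[OF that] by simp
  have "?f ` {0..<n} = h ` (CC ` {0..<n})"
    using fx by (auto simp: image_iff)
  also have "CC ` {0..<n} = cosets_D n ?G" unfolding cosets_D_def by simp
  finally have "card (?f ` {0..<n}) = card (cosets_D n ?G)" using hinj by (simp add: card_image)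
  then have m: "q + (q - q div p) = card (?f ` {0..<n})" using card_D by simp
  have zd: "card {x \<in> {0..<n}. ?f ((x + a) mod n) = ?f x} \<in> {0, n - q}"
    if a: "a \<in> {0..<n}" "a \<noteq> 0" for a
  proof -
    have "{x \<in> {0..<n}. ?f ((x + a) mod n) = ?f x} = {x\<in>{0..<n}. \<not> p dvd x \<and> q dvd a}"
    proof (rule Collect_cong)
      fix x
      show "(x \<in> {0..<n} \<and> ?f ((x + a) mod n) = ?f x) \<longleftrightarrow> (x \<in> {0..<n} \<and> \<not> p dvd x \<and> q dvd a)"
      proof (cases "x < n")
        case True
        have yn: "(x+a) mod n < n" using n_pos by simp
        have "?f ((x + a) mod n) = ?f x \<longleftrightarrow> h (CC ((x+a) mod n)) = h (CC x)"
          using fx[OF True] fx[OF yn] by simp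
        also have "\<dots> \<longleftrightarrow> CC ((x+a) mod n) = CC x"
          using inj_on_eq_iff[OF hinj CC_in_D[OF yn] CC_in_D[OF True]] .
        also have "\<dots> \<longleftrightarrow> (\<not> p dvd x \<and> q dvd a)" using same_coset[OF True] a by simp
        finally show ?thesis using True by simp
      qed simp
    qed
    then show ?thesis using card_nondiv by (cases "q dvd a") simp_all
  qed
  show ?thesis unfolding zero_difference_fun_def using m zd by simp
qed

end

theorem proposition3p8:
  fixes p k n :: nat and G :: "nat set" and h :: "nat set \<Rightarrow> nat"
  assumes "prime p" and "k \<ge> 2" and "n = p ^ k"
    and "G = gen_subgroup n (p ^ (k - 1) + 1)"
    and "bij_betw h (cosets_D n G) {0..<card (cosets_D n G)}"
  shows "zero_difference_fun n (coset_index_fun n G h)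
           (2 * p ^ (k - 1) - p ^ (k - 2)) {0, p ^ k - p ^ (k - 1)}"
proof -
  define q where "q = p ^ (k - 1)"
  obtain j where j: "k = j + 2" using assms(2) by (metis add.commute le_add_diff_inverse)
  have p0: "p > 0" using assms(1) prime_gt_0_nat by blast
  have q: "q = p * p ^ j" unfolding q_def j by simp
  have pq: "p dvd q" unfolding q by simp
  have nq: "n = p * q" unfolding assms(3) q j by simp
  have nqq: "n dvd q * q" unfolding nq q by simp
  have qpos: "q > 0" unfolding q using p0 by simp
  interpret zd_setting p q n using assms(1) pq nq nqq qpos by unfold_locales
  have G: "G = gen_subgroup n (q + 1)" using assms(4) q_def by simp
  have z: "zero_difference_fun n (coset_index_fun n G h) (q + (q - q div p)) {0, n - q}"
    unfolding G by (rule main_loc) (use assms(5) G in simp)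
  have qdp: "q div p = p ^ (k - 2)" unfolding q j using p0 by simp
  have "q + (q - q div p) = 2 * p ^ (k - 1) - p ^ (k - 2)"
  proof -
    have le: "p ^ j \<le> p * p ^ j" using p0 by simp
    have "p ^ (k - 1) = p * p ^ j" "p ^ (k - 2) = p ^ j" using j by simp_all
    then show ?thesis unfolding qdp using q q_def le by simp
  qed
  moreover have "n - q = p ^ k - p ^ (k - 1)" using assms(3) q_def by simp
  ultimately show ?thesis using z by simp
qed

end
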